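(* Let $K$ be a field, $R$ a connected $\mathbb N$-graded $K$-algebra, and let $A$ be a graded double Ore extension of $R$ with generators $x_1,x_2$, relation $x_2x_1=p_{12}x_1x_2+p_{11}x_1^2+\tau_1x_1+\tau_2x_2+\tau_0$, and maps $\sigma=(\sigma_{ij})$, $\delta$. Then $A$ is a graded skew PBW extension of $R$ (in $x_1,x_2$) if and only if $p_{12}\neq0$, $p_{11}=0$, $\sigma_{11}$ and $\sigma_{22}$ are automorphisms of $R$, and $\sigma_{12}(r)=\sigma_{21}(r)=0$ for all $r\in R$.
   Context: A graded algebra is connected if its degree-zero part is $K$. A $K$-algebra $B\supseteq R$ is a right double Ore extension of $R$ if it is generated by $R$ and $x_1,x_2$; $x_2x_1=p_{12}x_1x_2+p_{11}x_1^2+\tau_1x_1+\tau_2x_2+\tau_0$ with $p_{12},p_{11}\in K$, $\tau_i\in R$; $B$ is a free left $R$-module with basis $\{x_1^ax_2^b\}_{a,b\ge0}$; and $x_1R+x_2R\subseteq Rx_1+Rx_2+R$. The maps are defined by $x_ir=\sigma_{i1}(r)x_1+\sigma_{i2}(r)x_2+\delta_i(r)$. A left double Ore extension: generated by $R$ and $x_1,x_2$, $x_1x_2=p'_{12}x_2x_1+p'_{11}x_1^2+x_1\tau'_1+x_2\tau'_2+\tau'_0$ ($p'\in K$, $\tau'\in R$), free right $R$-module with basis $\{x_1^ax_2^b\}$, and $x_1R+x_2R\subseteq Rx_1+Rx_2+R$. A double Ore extension is both, with the same generators. Graded means all relations are homogeneous with $\deg x_1=\deg x_2=1$. A ring $A$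 is a skew PBW extension of $R$ in $x_1,\dots,x_n$ if $R\subseteq A$; $A$ is a free left $R$-module on the monomials $x_1^{\alpha_1}\cdots x_n^{\alpha_n}$; for each $i$ and $r\ne0$ there is $c_{i,r}\in R\setminus\{0\}$ with $x_ir-c_{i,r}x_i\in R$; for all $i,j$ there is $c_{i,j}\in R\setminus\{0\}$ with $x_jx_i-c_{i,j}x_ix_j\in R+Rx_1+\cdots+Rx_n$; then $x_ir=\sigma_i(r)x_i+\delta_i(r)$ with $\sigma_i$ injective endomorphism, $\delta_i$ a $\sigma_i$-derivation. Bijective: all $\sigma_i$ bijective and $c_{i,j}$ invertible. Graded skew PBW extension: bijective, $R$ $\mathbb N$-graded, $\sigma_i$ graded, $\delta_i(R_m)\subseteq R_{m+1}$, $x_jx_i-c_{i,j}x_ix_j\in R_2+R_1x_1+\cdots+R_1x_n$ with $c_{i,j}\in R_0$. *)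

theory Defs
  imports Main
begin

text \<open>Everything lives inside one ring A, modelled as the whole type 'a.
  R is a subring of A, K a central subfield contained in R (A is a K-algebra).\<close>

definition is_subring :: "'a::ring_1 set \<Rightarrow> bool" where
  "is_subring R \<longleftrightarrow> 0 \<in> R \<and> 1 \<in> R \<and>
     (\<forall>a\<in>R. \<forall>b\<in>R. a + b \<in> R \<and> a * b \<in> R \<and> - a \<in> R)"

definition central_subfield :: "'a::ring_1 set \<Rightarrow> bool" where
  "central_subfield K \<longleftrightarrow> (0::'a) \<noteq> 1 \<and> is_subring K \<and>
     (\<forall>a\<in>K. \<forall>b\<in>K. a * b = b * a) \<and>
     (\<forall>a\<in>K. a \<noteq> 0 \<longrightarrow> (\<exists>b\<in>K. a * b = 1)) \<and>
     (\<forall>k\<in>K. \<forall>a. k * a = a * k)"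

definition connected_graded_algebra :: "'a::ring_1 set \<Rightarrow> 'a set \<Rightarrow> (nat \<Rightarrow> 'a set) \<Rightarrow> bool" where
  "connected_graded_algebra K R Rg \<longleftrightarrow> is_subring R \<and> K \<subseteq> R \<and>
     (\<forall>n. Rg n \<subseteq> R \<and> 0 \<in> Rg n \<and>
        (\<forall>a\<in>Rg n. \<forall>b\<in>Rg n. a + b \<in> Rg n \<and> - a \<in> Rg n) \<and>
        (\<forall>k\<in>K. \<forall>a\<in>Rg n. k * a \<in> Rg n)) \<and>
     (\<forall>m n. \<forall>a\<in>Rg m. \<forall>b\<in>Rg n. a * b \<in> Rg (m + n)) \<and>
     (\<forall>r\<in>R. \<exists>!f::nat \<Rightarrow> 'a. (\<forall>n. f n \<in> Rg n) \<and> finite {n. f n \<noteq> 0} \<and>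
                          r = (\<Sum>n\<in>{n. f n \<noteq> 0}. f n)) \<and>
     Rg 0 = K"

definition free_left_basis :: "'a::ring_1 set \<Rightarrow> 'a \<Rightarrow> 'a \<Rightarrow> bool" where
  "free_left_basis R x1 x2 \<longleftrightarrow>
     (\<forall>a::'a. \<exists>!c::nat \<times> nat \<Rightarrow> 'a. (\<forall>ij. c ij \<in> R) \<and> finite {ij. c ij \<noteq> 0} \<and>
        a = (\<Sum>ij\<in>{ij. c ij \<noteq> 0}. c ij * x1 ^ fst ij * x2 ^ snd ij))"

definition free_right_basis :: "'a::ring_1 set \<Rightarrow> 'a \<Rightarrow> 'a \<Rightarrow> bool" where
  "free_right_basis R x1 x2 \<longleftrightarrow>
     (\<forall>a::'a. \<exists>!c::nat \<times> nat \<Rightarrow> 'a. (\<forall>ij. c ij \<in> R) \<and> finite {ij. c ij \<noteq> 0} \<and>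
        a = (\<Sum>ij\<in>{ij. c ij \<noteq> 0}. x1 ^ fst ij * x2 ^ snd ij * c ij))"

text \<open>Graded right double Ore extension with the given data (p12,p11,tau,sigma,delta).
  Graded: deg x1 = deg x2 = 1 and all relations homogeneous.\<close>
definition graded_right_double_Ore ::
  "'a::ring_1 set \<Rightarrow> 'a set \<Rightarrow> (nat \<Rightarrow> 'a set) \<Rightarrow> 'a \<Rightarrow> 'a \<Rightarrow> 'a \<Rightarrow> 'a \<Rightarrow> 'a \<Rightarrow> 'a \<Rightarrow> 'a \<Rightarrow>
   ('a \<Rightarrow> 'a) \<Rightarrow> ('a \<Rightarrow> 'a) \<Rightarrow> ('a \<Rightarrow> 'a) \<Rightarrow> ('a \<Rightarrow> 'a) \<Rightarrow> ('a \<Rightarrow> 'a) \<Rightarrow> ('a \<Rightarrow> 'a) \<Rightarrow> bool" where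
  "graded_right_double_Ore K R Rg x1 x2 p12 p11 \<tau>0 \<tau>1 \<tau>2 \<sigma>11 \<sigma>12 \<sigma>21 \<sigma>22 \<delta>1 \<delta>2 \<longleftrightarrow>
     p12 \<in> K \<and> p11 \<in> K \<and> \<tau>1 \<in> Rg 1 \<and> \<tau>2 \<in> Rg 1 \<and> \<tau>0 \<in> Rg 2 \<and>
     x2 * x1 = p12 * x1 * x2 + p11 * x1 ^ 2 + \<tau>1 * x1 + \<tau>2 * x2 + \<tau>0 \<and>
     free_left_basis R x1 x2 \<and>
     (\<forall>r\<in>R. \<sigma>11 r \<in> R \<and> \<sigma>12 r \<in> R \<and> \<sigma>21 r \<in> R \<and> \<sigma>22 r \<in> R \<and> \<delta>1 r \<in> R \<and> \<delta>2 r \<in> R \<and>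
        x1 * r = \<sigma>11 r * x1 + \<sigma>12 r * x2 + \<delta>1 r \<and>
        x2 * r = \<sigma>21 r * x1 + \<sigma>22 r * x2 + \<delta>2 r) \<and>
     (\<forall>m. \<sigma>11 ` Rg m \<subseteq> Rg m \<and> \<sigma>12 ` Rg m \<subseteq> Rg m \<and> \<sigma>21 ` Rg m \<subseteq> Rg m \<and>
          \<sigma>22 ` Rg m \<subseteq> Rg m \<and> \<delta>1 ` Rg m \<subseteq> Rg (m + 1) \<and> \<delta>2 ` Rg m \<subseteq> Rg (m + 1))"

definition graded_left_double_Ore ::
  "'a::ring_1 set \<Rightarrow> 'a set \<Rightarrow> (nat \<Rightarrow> 'a set) \<Rightarrow> 'a \<Rightarrow> 'a \<Rightarrow> bool" where
  "graded_left_double_Ore K R Rg x1 x2 \<longleftrightarrow>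
     (\<exists>q12\<in>K. \<exists>q11\<in>K. \<exists>t1\<in>Rg 1. \<exists>t2\<in>Rg 1. \<exists>t0\<in>Rg 2.
        x1 * x2 = q12 * x2 * x1 + q11 * x1 ^ 2 + x1 * t1 + x2 * t2 + t0) \<and>
     free_right_basis R x1 x2 \<and>
     (\<forall>r\<in>R. \<forall>x\<in>{x1, x2}. \<exists>a\<in>R. \<exists>b\<in>R. \<exists>c\<in>R. x * r = a * x1 + b * x2 + c)"

definition graded_double_Ore ::
  "'a::ring_1 set \<Rightarrow> 'a set \<Rightarrow> (nat \<Rightarrow> 'a set) \<Rightarrow> 'a \<Rightarrow> 'a \<Rightarrow> 'a \<Rightarrow> 'a \<Rightarrow> 'a \<Rightarrow> 'a \<Rightarrow> 'a \<Rightarrow>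
   ('a \<Rightarrow> 'a) \<Rightarrow> ('a \<Rightarrow> 'a) \<Rightarrow> ('a \<Rightarrow> 'a) \<Rightarrow> ('a \<Rightarrow> 'a) \<Rightarrow> ('a \<Rightarrow> 'a) \<Rightarrow> ('a \<Rightarrow> 'a) \<Rightarrow> bool" where
  "graded_double_Ore K R Rg x1 x2 p12 p11 \<tau>0 \<tau>1 \<tau>2 \<sigma>11 \<sigma>12 \<sigma>21 \<sigma>22 \<delta>1 \<delta>2 \<longleftrightarrow>
     graded_right_double_Ore K R Rg x1 x2 p12 p11 \<tau>0 \<tau>1 \<tau>2 \<sigma>11 \<sigma>12 \<sigma>21 \<sigma>22 \<delta>1 \<delta>2 \<and>
     graded_left_double_Ore K R Rg x1 x2"

definition gen2 :: "'a \<Rightarrow> 'a \<Rightarrow> nat \<Rightarrow> 'a" where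
  "gen2 x1 x2 i = (if i = 1 then x1 else x2)"

definition skew_PBW2 :: "'a::ring_1 set \<Rightarrow> 'a \<Rightarrow> 'a \<Rightarrow> bool" where
  "skew_PBW2 R x1 x2 \<longleftrightarrow> is_subring R \<and> free_left_basis R x1 x2 \<and>
     (\<forall>i\<in>{1::nat, 2}. \<forall>r\<in>R. r \<noteq> 0 \<longrightarrow>
        (\<exists>c\<in>R. c \<noteq> 0 \<and> gen2 x1 x2 i * r - c * gen2 x1 x2 i \<in> R)) \<and>
     (\<forall>i\<in>{1::nat, 2}. \<forall>j\<in>{1::nat, 2}. \<exists>c\<in>R. c \<noteq> 0 \<and>
        gen2 x1 x2 j * gen2 x1 x2 i - c * gen2 x1 x2 i * gen2 x1 x2 j
          \<in> {r + a * x1 + b * x2 | r a b. r \<in> R \<and> a \<in> R \<and> b \<in> R})"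

text \<open>Graded skew PBW extension: bijective (sigma_i bijective, c_ij invertible),
  sigma_i graded, delta_i raising degree by one, and the c_ij in R_0 with
  x_j x_i - c_ij x_i x_j in R_2 + R_1 x1 + R_1 x2.\<close>
definition graded_skew_PBW2 :: "'a::ring_1 set \<Rightarrow> (nat \<Rightarrow> 'a set) \<Rightarrow> 'a \<Rightarrow> 'a \<Rightarrow> bool" where
  "graded_skew_PBW2 R Rg x1 x2 \<longleftrightarrow> skew_PBW2 R x1 x2 \<and>
     (\<forall>i\<in>{1::nat, 2}. \<exists>\<sigma> \<delta>. (\<forall>r\<in>R. \<sigma> r \<in> R \<and> \<delta> r \<in> R \<and>
            gen2 x1 x2 i * r = \<sigma> r * gen2 x1 x2 i + \<delta> r) \<and>
        bij_betw \<sigma> R R \<and> (\<forall>m. \<sigma> ` Rg m \<subseteq> Rg m) \<and> (\<forall>m. \<delta> ` Rg m \<subseteq> Rg (m + 1))) \<and>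
     (\<forall>i\<in>{1::nat, 2}. \<forall>j\<in>{1::nat, 2}. \<exists>c\<in>Rg 0. c \<noteq> 0 \<and>
        (\<exists>d\<in>R. c * d = 1 \<and> d * c = 1) \<and>
        gen2 x1 x2 j * gen2 x1 x2 i - c * gen2 x1 x2 i * gen2 x1 x2 j
          \<in> {r + a * x1 + b * x2 | r a b. r \<in> Rg 2 \<and> a \<in> Rg 1 \<and> b \<in> Rg 1})"

definition ring_automorphism :: "'a::ring_1 set \<Rightarrow> ('a \<Rightarrow> 'a) \<Rightarrow> bool" where
  "ring_automorphism R f \<longleftrightarrow> bij_betw f R R \<and> f 1 = 1 \<and>
     (\<forall>a\<in>R. \<forall>b\<in>R. f (a + b) = f a + f b \<and> f (a * b) = f a * f b)"

end

theory Submission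
  imports Defs
begin

lemma indep_gen:
  fixes R :: "'a::ring_1 set"
  assumes fb: "free_left_basis R x1 x2" and sr: "is_subring R"
    and fin: "finite S" and cR: "\<forall>ij\<in>S. c ij \<in> R"
    and s0: "(\<Sum>ij\<in>S. c ij * x1 ^ fst ij * x2 ^ snd ij) = 0"
  shows "\<forall>ij\<in>S. c ij = 0"
proof -
  define c' where "c' ij = (if ij \<in> S then c ij else 0)" for ij
  have z: "0 \<in> R" using sr unfolding is_subring_def by blast
  have c'R: "\<forall>ij. c' ij \<in> R" using cR z by (simp add: c'_def)
  have sub: "{ij. c' ij \<noteq> 0} \<subseteq> S" by (auto simp: c'_def split: if_splits)
  have fin': "finite {ij. c' ij \<noteq> 0}" using sub fin finite_subset by blast
  have "(\<Sum>ij\<in>{ij. c' ij \<noteq> 0}. c' ij * x1 ^ fst ij * x2 ^ snd ij)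
      = (\<Sum>ij\<in>S. c' ij * x1 ^ fst ij * x2 ^ snd ij)"
    by (rule sum.mono_neutral_left[OF fin sub]) auto
  also have "\<dots> = (\<Sum>ij\<in>S. c ij * x1 ^ fst ij * x2 ^ snd ij)"
    by (rule sum.cong) (auto simp: c'_def)
  finally have e1: "(0::'a) = (\<Sum>ij\<in>{ij. c' ij \<noteq> 0}. c' ij * x1 ^ fst ij * x2 ^ snd ij)"
    using s0 by simp
  from fb have u: "\<exists>!c::nat \<times> nat \<Rightarrow> 'a. (\<forall>ij. c ij \<in> R) \<and> finite {ij. c ij \<noteq> 0} \<and>
        (0::'a) = (\<Sum>ij\<in>{ij. c ij \<noteq> 0}. c ij * x1 ^ fst ij * x2 ^ snd ij)"
    unfolding free_left_basis_def by blast
  have P0: "(\<forall>ij. (\<lambda>_. 0::'a) ij \<in> R) \<and> finite {ij. (\<lambda>_. 0::'a) ij \<noteq> 0} \<and>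
        (0::'a) = (\<Sum>ij\<in>{ij. (\<lambda>_. 0::'a) ij \<noteq> 0}. (\<lambda>_. 0::'a) ij * x1 ^ fst ij * x2 ^ snd ij)"
    using z by simp
  have P1: "(\<forall>ij. c' ij \<in> R) \<and> finite {ij. c' ij \<noteq> 0} \<and>
        (0::'a) = (\<Sum>ij\<in>{ij. c' ij \<noteq> 0}. c' ij * x1 ^ fst ij * x2 ^ snd ij)"
    using c'R fin' e1 by blast
  obtain g where "\<And>y. (\<forall>ij. y ij \<in> R) \<and> finite {ij. y ij \<noteq> 0} \<and>
        (0::'a) = (\<Sum>ij\<in>{ij. y ij \<noteq> 0}. y ij * x1 ^ fst ij * x2 ^ snd ij) \<Longrightarrow> y = g"
    using u by (elim ex1E) blast
  from this[OF P1] this[OF P0] have "c' = (\<lambda>_. 0)" by simp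
  then show ?thesis by (metis c'_def)
qed

lemma indep5:
  fixes R :: "'a::ring_1 set"
  assumes fb: "free_left_basis R x1 x2" and sr: "is_subring R"
    and R: "a \<in> R" "b \<in> R" "c \<in> R" "d \<in> R" "e \<in> R"
    and eq: "a + b * x1 + c * x2 + d * x1 * x2 + e * x1 ^ 2 = 0"
  shows "a = 0 \<and> b = 0 \<and> c = 0 \<and> d = 0 \<and> e = 0"
proof -
  define f where "f ij = (if ij = (0,0) then a else if ij = (1,0) then b else if ij = (0,1) then c
     else if ij = (1,1) then d else e)" for ij :: "nat \<times> nat"
  let ?S = "{(0,0),(1,0),(0,1),(1,1),(2,0)} :: (nat \<times> nat) set"
  have "(\<Sum>ij\<in>?S. f ij * x1 ^ fst ij * x2 ^ snd ij) = a + b * x1 + c * x2 + d * x1 * x2 + e * x1 ^ 2"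
    by (simp add: f_def algebra_simps)
  then have "\<forall>ij\<in>?S. f ij = 0"
    using indep_gen[OF fb sr, of ?S f] R eq by (auto simp: f_def)
  then show ?thesis by (auto simp: f_def)
qed

lemma indep5eq:
  fixes R :: "'a::ring_1 set"
  assumes fb: "free_left_basis R x1 x2" and sr: "is_subring R"
    and R: "a \<in> R" "b \<in> R" "c \<in> R" "d \<in> R" "e \<in> R"
      "a' \<in> R" "b' \<in> R" "c' \<in> R" "d' \<in> R" "e' \<in> R"
    and eq: "a + b * x1 + c * x2 + d * x1 * x2 + e * x1 ^ 2 =
             a' + b' * x1 + c' * x2 + d' * x1 * x2 + e' * x1 ^ 2"
  shows "a = a' \<and> b = b' \<and> c = c' \<and> d = d' \<and> e = e'"
proof -
  have cl: "\<And>u v. u \<in> R \<Longrightarrow> v \<in> R \<Longrightarrow> u - v \<in> R"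
    using sr unfolding is_subring_def by (metis diff_conv_add_uminus)
  have "(a - a') + (b - b') * x1 + (c - c') * x2 + (d - d') * x1 * x2 + (e - e') * x1 ^ 2 = 0"
    using eq by (simp add: algebra_simps)
  from indep5[OF fb sr cl cl cl cl cl this] R show ?thesis by simp
qed


lemma auto_lemma:
  fixes R :: "'a::ring_1 set"
  assumes sr: "is_subring R"
    and uniq: "\<And>a b a' b'. a \<in> R \<Longrightarrow> b \<in> R \<Longrightarrow> a' \<in> R \<Longrightarrow> b' \<in> R \<Longrightarrow>
        a + b * x = a' + b' * x \<Longrightarrow> a = a' \<and> b = b'"
    and sd: "\<And>r. r \<in> R \<Longrightarrow> s r \<in> R \<and> d r \<in> R \<and> x * r = s r * x + d r"
    and bij: "bij_betw s R R"
  shows "ring_automorphism R s"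
proof -
  have cl: "\<And>a b. a \<in> R \<Longrightarrow> b \<in> R \<Longrightarrow> a + b \<in> R \<and> a * b \<in> R"
    and z: "0 \<in> R" and o: "1 \<in> R" using sr unfolding is_subring_def by auto
  have "s 1 = 1"
  proof -
    have "d 1 + s 1 * x = 0 + 1 * x" using sd[OF o] by (simp add: add.commute)
    then show ?thesis using uniq[of "d 1" "s 1" 0 1] sd[OF o] z o by blast
  qed
  moreover have "s (a + b) = s a + s b \<and> s (a * b) = s a * s b" if a: "a \<in> R" and b: "b \<in> R" for a b
  proof
    have ab: "a + b \<in> R" "a * b \<in> R" using cl a b by auto
    have "d (a+b) + s (a+b) * x = (d a + d b) + (s a + s b) * x"
      using sd[OF ab(1)] sd[OF a] sd[OF b] by (simp add: algebra_simps)
    moreover have "d a + d b \<in> R" "s a + s b \<in> R" using cl sd a b by auto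
    ultimately show "s (a + b) = s a + s b" using uniq[of "d (a+b)" "s (a+b)" "d a + d b" "s a + s b"] sd[OF ab(1)] by blast
    have "x * (a * b) = (s a * x + d a) * b" using sd[OF a] by (simp add: mult.assoc[symmetric])
    also have "\<dots> = s a * (x * b) + d a * b" by (simp add: algebra_simps)
    also have "\<dots> = (s a * d b + d a * b) + (s a * s b) * x" using sd[OF b] by (simp add: algebra_simps)
    finally have "d (a*b) + s (a*b) * x = (s a * d b + d a * b) + (s a * s b) * x"
      using sd[OF ab(2)] by (simp add: add.commute)
    moreover have "s a * d b + d a * b \<in> R" "s a * s b \<in> R" using cl sd a b by auto
    ultimately show "s (a * b) = s a * s b"
      using uniq[of "d (a*b)" "s (a*b)" "s a * d b + d a * b" "s a * s b"] sd[OF ab(2)] by blast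
  qed
  ultimately show ?thesis using bij unfolding ring_automorphism_def by blast
qed

theorem theorem3p8:
  fixes K R :: "'a::ring_1 set" and Rg :: "nat \<Rightarrow> 'a set"
    and x1 x2 p12 p11 \<tau>0 \<tau>1 \<tau>2 :: 'a
    and \<sigma>11 \<sigma>12 \<sigma>21 \<sigma>22 \<delta>1 \<delta>2 :: "'a \<Rightarrow> 'a"
  assumes "central_subfield K"
    and "connected_graded_algebra K R Rg"
    and "graded_double_Ore K R Rg x1 x2 p12 p11 \<tau>0 \<tau>1 \<tau>2 \<sigma>11 \<sigma>12 \<sigma>21 \<sigma>22 \<delta>1 \<delta>2"
  shows "graded_skew_PBW2 R Rg x1 x2 \<longleftrightarrow>
           p12 \<noteq> 0 \<and> p11 = 0 \<and> ring_automorphism R \<sigma>11 \<and> ring_automorphism R \<sigma>22 \<and>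
           (\<forall>r\<in>R. \<sigma>12 r = 0 \<and> \<sigma>21 r = 0)"
proof -
  have cs: "(0::'a) \<noteq> 1" "is_subring K" "\<forall>a\<in>K. \<forall>b\<in>K. a * b = b * a"
     "\<forall>a\<in>K. a \<noteq> 0 \<longrightarrow> (\<exists>b\<in>K. a * b = 1)" "\<forall>k\<in>K. \<forall>a. k * a = a * k"
    using assms(1) unfolding central_subfield_def by auto
  have sr: "is_subring R" and KR: "K \<subseteq> R" and RgR: "\<And>n. Rg n \<subseteq> R"
    and z: "\<And>n. 0 \<in> Rg n"
    and Rgcl: "\<And>n a b. a \<in> Rg n \<Longrightarrow> b \<in> Rg n \<Longrightarrow> a + b \<in> Rg n \<and> - a \<in> Rg n"
    and Rgk: "\<And>n k a. k \<in> K \<Longrightarrow> a \<in> Rg n \<Longrightarrow> k * a \<in> Rg n"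
    and Rg0: "Rg 0 = K"
    using assms(2) unfolding connected_graded_algebra_def by auto
  have RgR': "\<And>n x. x \<in> Rg n \<Longrightarrow> x \<in> R" using RgR by blast
  have Rcl: "\<And>a b. a \<in> R \<Longrightarrow> b \<in> R \<Longrightarrow> a + b \<in> R \<and> a * b \<in> R \<and> - a \<in> R"
    and R0: "0 \<in> R" and R1: "1 \<in> R" using sr unfolding is_subring_def by auto
  have ore: "p12 \<in> K" "p11 \<in> K" "\<tau>1 \<in> Rg 1" "\<tau>2 \<in> Rg 1" "\<tau>0 \<in> Rg 2"
     "x2 * x1 = p12 * x1 * x2 + p11 * x1 ^ 2 + \<tau>1 * x1 + \<tau>2 * x2 + \<tau>0"
     "free_left_basis R x1 x2"
     "\<forall>r\<in>R. \<sigma>11 r \<in> R \<and> \<sigma>12 r \<in> R \<and> \<sigma>21 r \<in> R \<and> \<sigma>22 r \<in> R \<and> \<delta>1 r \<in> R \<and> \<delta>2 r \<in> R \<and>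
        x1 * r = \<sigma>11 r * x1 + \<sigma>12 r * x2 + \<delta>1 r \<and>
        x2 * r = \<sigma>21 r * x1 + \<sigma>22 r * x2 + \<delta>2 r"
     "\<forall>m. \<sigma>11 ` Rg m \<subseteq> Rg m \<and> \<sigma>12 ` Rg m \<subseteq> Rg m \<and> \<sigma>21 ` Rg m \<subseteq> Rg m \<and>
          \<sigma>22 ` Rg m \<subseteq> Rg m \<and> \<delta>1 ` Rg m \<subseteq> Rg (m + 1) \<and> \<delta>2 ` Rg m \<subseteq> Rg (m + 1)"
    using assms(3) unfolding graded_double_Ore_def graded_right_double_Ore_def by auto
  note fb = ore(7)
  note ind = indep5eq[OF fb sr]
  have u1: "a = a' \<and> b = b'" if "a \<in> R" "b \<in> R" "a' \<in> R" "b' \<in> R" "a + b * x1 = a' + b' * x1"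
    for a b a' b'
    using ind[of a b 0 0 0 a' b' 0 0 0] that R0 by simp
  have u2: "a = a' \<and> b = b'" if "a \<in> R" "b \<in> R" "a' \<in> R" "b' \<in> R" "a + b * x2 = a' + b' * x2"
    for a b a' b'
    using ind[of a 0 b 0 0 a' 0 b' 0 0] that R0 by simp
  show ?thesis
  proof
    assume P: "graded_skew_PBW2 R Rg x1 x2"
    have P2: "\<forall>i\<in>{1::nat, 2}. \<exists>\<sigma> \<delta>. (\<forall>r\<in>R. \<sigma> r \<in> R \<and> \<delta> r \<in> R \<and>
            gen2 x1 x2 i * r = \<sigma> r * gen2 x1 x2 i + \<delta> r) \<and>
        bij_betw \<sigma> R R \<and> (\<forall>m. \<sigma> ` Rg m \<subseteq> Rg m) \<and> (\<forall>m. \<delta> ` Rg m \<subseteq> Rg (m + 1))"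
      using P unfolding graded_skew_PBW2_def by (rule conjunct1[OF conjunct2])
    have P3: "\<forall>i\<in>{1::nat, 2}. \<forall>j\<in>{1::nat, 2}. \<exists>c\<in>Rg 0. c \<noteq> 0 \<and>
        (\<exists>d\<in>R. c * d = 1 \<and> d * c = 1) \<and>
        gen2 x1 x2 j * gen2 x1 x2 i - c * gen2 x1 x2 i * gen2 x1 x2 j
          \<in> {r + a * x1 + b * x2 | r a b. r \<in> Rg 2 \<and> a \<in> Rg 1 \<and> b \<in> Rg 1}"
      using P unfolding graded_skew_PBW2_def by (rule conjunct2[OF conjunct2])
    have g1: "gen2 x1 x2 1 = x1" and g2: "gen2 x1 x2 2 = x2" by (simp_all add: gen2_def)
    have i1: "(1::nat) \<in> {1, 2}" and i2: "(2::nat) \<in> {1, 2}" by simp_all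
    obtain sa da where sa0: "(\<forall>r\<in>R. sa r \<in> R \<and> da r \<in> R \<and> gen2 x1 x2 1 * r = sa r * gen2 x1 x2 1 + da r) \<and>
        bij_betw sa R R"
      using bspec[OF P2 i1] by (elim exE conjE) (intro that conjI)
    have sa: "\<forall>r\<in>R. sa r \<in> R \<and> da r \<in> R \<and> x1 * r = sa r * x1 + da r"
        and sab: "bij_betw sa R R" using sa0 unfolding g1 by simp_all
    obtain sb db where sb0: "(\<forall>r\<in>R. sb r \<in> R \<and> db r \<in> R \<and> gen2 x1 x2 2 * r = sb r * gen2 x1 x2 2 + db r) \<and>
        bij_betw sb R R"
      using bspec[OF P2 i2] by (elim exE conjE) (intro that conjI)
    have sb: "\<forall>r\<in>R. sb r \<in> R \<and> db r \<in> R \<and> x2 * r = sb r * x2 + db r"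
        and sbb: "bij_betw sb R R" using sb0 unfolding g2 by simp_all
    obtain c where c0: "c \<in> Rg 0" "c \<noteq> 0" and
       cm: "gen2 x1 x2 2 * gen2 x1 x2 1 - c * gen2 x1 x2 1 * gen2 x1 x2 2
          \<in> {r + a * x1 + b * x2 | r a b. r \<in> Rg 2 \<and> a \<in> Rg 1 \<and> b \<in> Rg 1}"
      using bspec[OF bspec[OF P3 i1] i2] by (elim bexE conjE) (intro that)
    from cm obtain r a b where c1: "r \<in> Rg 2" "a \<in> Rg 1" "b \<in> Rg 1"
        "x2 * x1 - c * x1 * x2 = r + a * x1 + b * x2"
      unfolding g1 g2 by blast
    note c = c0 c1
    have e1: "\<sigma>11 t = sa t \<and> \<sigma>12 t = 0" if t: "t \<in> R" for t
    proof -
      have A: "x1 * t = \<sigma>11 t * x1 + \<sigma>12 t * x2 + \<delta>1 t" using ore(8) t by blast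
      have B: "x1 * t = sa t * x1 + da t" using sa t by blast
      have "\<delta>1 t + \<sigma>11 t * x1 + \<sigma>12 t * x2 + 0 * x1 * x2 + 0 * x1 ^ 2 = x1 * t"
        unfolding A by (simp only: mult_zero_left add_0_right add_0_left add.commute add.left_commute)
      also have "\<dots> = da t + sa t * x1 + 0 * x2 + 0 * x1 * x2 + 0 * x1 ^ 2"
        unfolding B by (simp only: mult_zero_left add_0_right add_0_left add.commute add.left_commute)
      finally have EQ: "\<delta>1 t + \<sigma>11 t * x1 + \<sigma>12 t * x2 + 0 * x1 * x2 + 0 * x1 ^ 2 =
            da t + sa t * x1 + 0 * x2 + 0 * x1 * x2 + 0 * x1 ^ 2" .
      have "\<sigma>11 t \<in> R" "\<sigma>12 t \<in> R" "\<delta>1 t \<in> R" "sa t \<in> R" "da t \<in> R" using ore(8) sa t by auto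
      from ind[OF _ _ _ _ _ _ _ _ _ _ EQ] this R0 show ?thesis by simp
    qed
    have e2: "\<sigma>22 t = sb t \<and> \<sigma>21 t = 0" if t: "t \<in> R" for t
    proof -
      have A: "x2 * t = \<sigma>21 t * x1 + \<sigma>22 t * x2 + \<delta>2 t" using ore(8) t by blast
      have B: "x2 * t = sb t * x2 + db t" using sb t by blast
      have "\<delta>2 t + \<sigma>21 t * x1 + \<sigma>22 t * x2 + 0 * x1 * x2 + 0 * x1 ^ 2 = x2 * t"
        unfolding A by (simp only: mult_zero_left add_0_right add_0_left add.commute add.left_commute)
      also have "\<dots> = db t + 0 * x1 + sb t * x2 + 0 * x1 * x2 + 0 * x1 ^ 2"
        unfolding B by (simp only: mult_zero_left add_0_right add_0_left add.commute add.left_commute)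
      finally have EQ: "\<delta>2 t + \<sigma>21 t * x1 + \<sigma>22 t * x2 + 0 * x1 * x2 + 0 * x1 ^ 2 =
            db t + 0 * x1 + sb t * x2 + 0 * x1 * x2 + 0 * x1 ^ 2" .
      have "\<sigma>21 t \<in> R" "\<sigma>22 t \<in> R" "\<delta>2 t \<in> R" "sb t \<in> R" "db t \<in> R" using ore(8) sb t by auto
      from ind[OF _ _ _ _ _ _ _ _ _ _ EQ] this R0 show ?thesis by simp
    qed
    have pp: "p12 = c \<and> p11 = 0"
    proof -
      have EQ: "\<tau>0 + \<tau>1 * x1 + \<tau>2 * x2 + p12 * x1 * x2 + p11 * x1 ^ 2 =
            r + a * x1 + b * x2 + c * x1 * x2 + 0 * x1 ^ 2"
      proof -
        have X: "x2 * x1 = c * x1 * x2 + (r + a * x1 + b * x2)"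
          using c(6) by (simp add: diff_eq_eq)
        have "\<tau>0 + \<tau>1 * x1 + \<tau>2 * x2 + p12 * x1 * x2 + p11 * x1 ^ 2 = x2 * x1"
          unfolding ore(6) by (simp only: add.commute add.left_commute)
        also have "\<dots> = r + a * x1 + b * x2 + c * x1 * x2 + 0 * x1 ^ 2"
          unfolding X by (simp only: mult_zero_left add_0_right add_0_left add.commute add.left_commute)
        finally show ?thesis .
      qed
      have M: "\<tau>0 \<in> R" "\<tau>1 \<in> R" "\<tau>2 \<in> R" "p12 \<in> R" "p11 \<in> R" "r \<in> R" "a \<in> R" "b \<in> R" "c \<in> R"
        using ore(1-5) c(1-5) KR Rg0 RgR' by (auto simp del: One_nat_def)
      note I = ind[of \<tau>0 \<tau>1 \<tau>2 p12 p11 r a b c 0]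
      have "\<tau>0 = r \<and> \<tau>1 = a \<and> \<tau>2 = b \<and> p12 = c \<and> p11 = 0"
        by (rule I[OF M R0 EQ])
      then show ?thesis by (elim conjE) (intro conjI)
    qed
    have a1: "ring_automorphism R \<sigma>11"
    proof (rule auto_lemma[OF sr u1])
      fix r assume r: "r \<in> R"
      have "x1 * r = \<sigma>11 r * x1 + \<delta>1 r" using ore(8) r e1[OF r] by (metis add_0_left add_0_right mult_zero_left)
      then show "\<sigma>11 r \<in> R \<and> \<delta>1 r \<in> R \<and> x1 * r = \<sigma>11 r * x1 + \<delta>1 r"
        using ore(8) r by blast
    next
      have "bij_betw \<sigma>11 R R = bij_betw sa R R" by (rule bij_betw_cong) (simp add: e1)
      then show "bij_betw \<sigma>11 R R" using sab by simp
    qed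
    have a2: "ring_automorphism R \<sigma>22"
    proof (rule auto_lemma[OF sr u2])
      fix r assume r: "r \<in> R"
      have "x2 * r = \<sigma>22 r * x2 + \<delta>2 r" using ore(8) r e2[OF r] by (metis add_0_left add_0_right mult_zero_left)
      then show "\<sigma>22 r \<in> R \<and> \<delta>2 r \<in> R \<and> x2 * r = \<sigma>22 r * x2 + \<delta>2 r"
        using ore(8) r by blast
    next
      have "bij_betw \<sigma>22 R R = bij_betw sb R R" by (rule bij_betw_cong) (simp add: e2)
      then show "bij_betw \<sigma>22 R R" using sbb by simp
    qed
    show "p12 \<noteq> 0 \<and> p11 = 0 \<and> ring_automorphism R \<sigma>11 \<and> ring_automorphism R \<sigma>22 \<and>
           (\<forall>r\<in>R. \<sigma>12 r = 0 \<and> \<sigma>21 r = 0)"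
      using pp c(2) a1 a2 e1 e2 by blast
  next
    assume H: "p12 \<noteq> 0 \<and> p11 = 0 \<and> ring_automorphism R \<sigma>11 \<and> ring_automorphism R \<sigma>22 \<and>
           (\<forall>r\<in>R. \<sigma>12 r = 0 \<and> \<sigma>21 r = 0)"
    have b11: "bij_betw \<sigma>11 R R" and b22: "bij_betw \<sigma>22 R R"
      using H unfolding ring_automorphism_def by auto
    have s0: "\<sigma>11 0 = 0" "\<sigma>22 0 = 0"
    proof -
      have "\<sigma>11 (0 + 0) = \<sigma>11 0 + \<sigma>11 0" "\<sigma>22 (0 + 0) = \<sigma>22 0 + \<sigma>22 0"
        using H R0 unfolding ring_automorphism_def by blast+
      then show "\<sigma>11 0 = 0" "\<sigma>22 0 = 0" by simp_all
    qed
    have nz1: "\<sigma>11 t \<noteq> 0" if "t \<in> R" "t \<noteq> 0" for t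
      using b11 s0 that R0 unfolding bij_betw_def inj_on_def by metis
    have nz2: "\<sigma>22 t \<noteq> 0" if "t \<in> R" "t \<noteq> 0" for t
      using b22 s0 that R0 unfolding bij_betw_def inj_on_def by metis
    have x1r: "x1 * t = \<sigma>11 t * x1 + \<delta>1 t" if "t \<in> R" for t
      using ore(8) H that by fastforce
    have x2r: "x2 * t = \<sigma>22 t * x2 + \<delta>2 t" if "t \<in> R" for t
      using ore(8) H that by fastforce
    obtain q where q: "q \<in> K" "p12 * q = 1" using cs(4) ore(1) H by blast
    have qp: "q * p12 = 1" using q cs(3) ore(1) by metis
    have qnz: "q \<noteq> 0" using q cs(1) by auto
    have h12: "x2 * x1 - p12 * x1 * x2 = \<tau>0 + \<tau>1 * x1 + \<tau>2 * x2"
      using ore(6) H by (simp add: algebra_simps)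
    have "q * x2 * x1 = q * (x2 * x1)" by (simp add: mult.assoc)
    also have "\<dots> = (q * p12) * x1 * x2 + q * \<tau>1 * x1 + q * \<tau>2 * x2 + q * \<tau>0"
      using ore(6) H by (simp add: algebra_simps)
    finally have h21: "x1 * x2 - q * x2 * x1 = (- (q * \<tau>0)) + (- (q * \<tau>1)) * x1 + (- (q * \<tau>2)) * x2"
      using qp by (simp add: algebra_simps)
    have m21: "- (q * \<tau>0) \<in> Rg 2" "- (q * \<tau>1) \<in> Rg 1" "- (q * \<tau>2) \<in> Rg 1"
      using Rgk Rgcl q ore by blast+
    have W12: "\<exists>r a b. x2 * x1 - p12 * x1 * x2 = r + a * x1 + b * x2 \<and> r \<in> Rg 2 \<and> a \<in> Rg (Suc 0) \<and> b \<in> Rg (Suc 0)"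
      using h12 ore(3-5) by (intro exI[of _ \<tau>0] exI[of _ \<tau>1] exI[of _ \<tau>2]) simp
    have W21: "\<exists>r a b. x1 * x2 - q * x2 * x1 = r + a * x1 + b * x2 \<and> r \<in> Rg 2 \<and> a \<in> Rg (Suc 0) \<and> b \<in> Rg (Suc 0)"
      using h21 m21 by (intro exI[of _ "- (q * \<tau>0)"] exI[of _ "- (q * \<tau>1)"] exI[of _ "- (q * \<tau>2)"]) simp
    have D12: "\<exists>d\<in>R. p12 * d = 1 \<and> d * p12 = 1" using q qp KR by blast
    have D21: "\<exists>d\<in>R. q * d = 1 \<and> d * q = 1" using q qp KR ore(1) by blast
    have K1: "1 \<in> K" "0 \<noteq> (1::'a)" using cs unfolding is_subring_def by auto
    have same: "x * x - 1 * x * x = 0 + 0 * x1 + 0 * x2" for x :: 'a by simp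
    have sameG: "\<exists>r a b. x * x - 1 * x * x = r + a * x1 + b * x2 \<and> r \<in> Rg 2 \<and> a \<in> Rg (Suc 0) \<and> b \<in> Rg (Suc 0)"
      for x :: 'a by (intro exI[of _ 0]) (simp add: z)
    have pbw: "skew_PBW2 R x1 x2"
      unfolding skew_PBW2_def
    proof (intro conjI)
      show "is_subring R" by (rule sr)
      show "free_left_basis R x1 x2" by (rule fb)
      show "\<forall>i\<in>{1::nat, 2}. \<forall>r\<in>R. r \<noteq> 0 \<longrightarrow>
        (\<exists>c\<in>R. c \<noteq> 0 \<and> gen2 x1 x2 i * r - c * gen2 x1 x2 i \<in> R)"
      proof (simp add: gen2_def, intro conjI ballI impI)
        fix r assume r: "r \<in> R" "r \<noteq> 0"
        show "\<exists>c\<in>R. c \<noteq> 0 \<and> x1 * r - c * x1 \<in> R"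
          using x1r[OF r(1)] nz1[OF r] ore(8) r by (intro bexI[of _ "\<sigma>11 r"]) auto
        show "\<exists>c\<in>R. c \<noteq> 0 \<and> x2 * r - c * x2 \<in> R"
          using x2r[OF r(1)] nz2[OF r] ore(8) r by (intro bexI[of _ "\<sigma>22 r"]) auto
      qed
      show "\<forall>i\<in>{1::nat, 2}. \<forall>j\<in>{1::nat, 2}. \<exists>c\<in>R. c \<noteq> 0 \<and>
        gen2 x1 x2 j * gen2 x1 x2 i - c * gen2 x1 x2 i * gen2 x1 x2 j
          \<in> {r + a * x1 + b * x2 | r a b. r \<in> R \<and> a \<in> R \<and> b \<in> R}"
      proof (simp add: gen2_def, intro conjI)
        show "\<exists>c\<in>R. c \<noteq> 0 \<and> (\<exists>r a b. x1 * x1 - c * x1 * x1 = r + a * x1 + b * x2 \<and> r \<in> R \<and> a \<in> R \<and> b \<in> R)"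
          using same[of x1] R0 R1 K1 by (intro bexI[of _ 1] conjI exI[of _ 0]) auto
        show "\<exists>c\<in>R. c \<noteq> 0 \<and> (\<exists>r a b. x2 * x2 - c * x2 * x2 = r + a * x1 + b * x2 \<and> r \<in> R \<and> a \<in> R \<and> b \<in> R)"
          using same[of x2] R0 R1 K1 by (intro bexI[of _ 1] conjI exI[of _ 0]) auto
        show "\<exists>c\<in>R. c \<noteq> 0 \<and> (\<exists>r a b. x2 * x1 - c * x1 * x2 = r + a * x1 + b * x2 \<and> r \<in> R \<and> a \<in> R \<and> b \<in> R)"
          using h12 H ore(1-5) KR RgR' by (intro bexI[of _ p12] conjI exI[of _ \<tau>0] exI[of _ \<tau>1] exI[of _ \<tau>2]) auto
        show "\<exists>c\<in>R. c \<noteq> 0 \<and> (\<exists>r a b. x1 * x2 - c * x2 * x1 = r + a * x1 + b * x2 \<and> r \<in> R \<and> a \<in> R \<and> b \<in> R)"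
          using h21 qnz q m21 KR RgR' by (intro bexI[of _ q] conjI exI[of _ "- (q * \<tau>0)"] exI[of _ "- (q * \<tau>1)"] exI[of _ "- (q * \<tau>2)"]) auto
      qed
    qed
    show "graded_skew_PBW2 R Rg x1 x2"
      unfolding graded_skew_PBW2_def
    proof (intro conjI)
      show "skew_PBW2 R x1 x2" by (rule pbw)
      show "\<forall>i\<in>{1::nat, 2}. \<exists>\<sigma> \<delta>. (\<forall>r\<in>R. \<sigma> r \<in> R \<and> \<delta> r \<in> R \<and>
            gen2 x1 x2 i * r = \<sigma> r * gen2 x1 x2 i + \<delta> r) \<and>
        bij_betw \<sigma> R R \<and> (\<forall>m. \<sigma> ` Rg m \<subseteq> Rg m) \<and> (\<forall>m. \<delta> ` Rg m \<subseteq> Rg (m + 1))"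
      proof (simp add: gen2_def, intro conjI)
        show "\<exists>\<sigma> \<delta>. (\<forall>r\<in>R. \<sigma> r \<in> R \<and> \<delta> r \<in> R \<and> x1 * r = \<sigma> r * x1 + \<delta> r) \<and>
            bij_betw \<sigma> R R \<and> (\<forall>m. \<sigma> ` Rg m \<subseteq> Rg m) \<and> (\<forall>m. \<delta> ` Rg m \<subseteq> Rg (Suc m))"
          using ore(8,9) x1r b11 by (intro exI[of _ \<sigma>11] exI[of _ \<delta>1]) auto
        show "\<exists>\<sigma> \<delta>. (\<forall>r\<in>R. \<sigma> r \<in> R \<and> \<delta> r \<in> R \<and> x2 * r = \<sigma> r * x2 + \<delta> r) \<and>
            bij_betw \<sigma> R R \<and> (\<forall>m. \<sigma> ` Rg m \<subseteq> Rg m) \<and> (\<forall>m. \<delta> ` Rg m \<subseteq> Rg (Suc m))"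
          using ore(8,9) x2r b22 by (intro exI[of _ \<sigma>22] exI[of _ \<delta>2]) auto
      qed
      show "\<forall>i\<in>{1::nat, 2}. \<forall>j\<in>{1::nat, 2}. \<exists>c\<in>Rg 0. c \<noteq> 0 \<and>
        (\<exists>d\<in>R. c * d = 1 \<and> d * c = 1) \<and>
        gen2 x1 x2 j * gen2 x1 x2 i - c * gen2 x1 x2 i * gen2 x1 x2 j
          \<in> {r + a * x1 + b * x2 | r a b. r \<in> Rg 2 \<and> a \<in> Rg 1 \<and> b \<in> Rg 1}"
      proof (simp add: gen2_def, intro conjI)
        show "\<exists>c\<in>Rg 0. c \<noteq> 0 \<and> (\<exists>d\<in>R. c * d = 1 \<and> d * c = 1) \<and> (\<exists>r a b. x1 * x1 - c * x1 * x1 = r + a * x1 + b * x2 \<and> r \<in> Rg 2 \<and> a \<in> Rg (Suc 0) \<and> b \<in> Rg (Suc 0))"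
          using sameG[of x1] z R1 K1 Rg0 by (intro bexI[of _ 1] conjI) auto
        show "\<exists>c\<in>Rg 0. c \<noteq> 0 \<and> (\<exists>d\<in>R. c * d = 1 \<and> d * c = 1) \<and> (\<exists>r a b. x2 * x2 - c * x2 * x2 = r + a * x1 + b * x2 \<and> r \<in> Rg 2 \<and> a \<in> Rg (Suc 0) \<and> b \<in> Rg (Suc 0))"
          using sameG[of x2] z R1 K1 Rg0 by (intro bexI[of _ 1] conjI) auto
        show "\<exists>c\<in>Rg 0. c \<noteq> 0 \<and> (\<exists>d\<in>R. c * d = 1 \<and> d * c = 1) \<and> (\<exists>r a b. x2 * x1 - c * x1 * x2 = r + a * x1 + b * x2 \<and> r \<in> Rg 2 \<and> a \<in> Rg (Suc 0) \<and> b \<in> Rg (Suc 0))"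
          by (rule bexI[of _ p12]) (use W12 D12 H ore(1) Rg0 in auto)
        show "\<exists>c\<in>Rg 0. c \<noteq> 0 \<and> (\<exists>d\<in>R. c * d = 1 \<and> d * c = 1) \<and> (\<exists>r a b. x1 * x2 - c * x2 * x1 = r + a * x1 + b * x2 \<and> r \<in> Rg 2 \<and> a \<in> Rg (Suc 0) \<and> b \<in> Rg (Suc 0))"
          by (rule bexI[of _ q]) (use W21 D21 qnz q Rg0 in auto)
      qed
    qed
  qed
qed

end
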